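(* Let $b>1$ be an integer and let $\mu,\sigma$ be the digit mean and digit standard deviation of some generalized $b$-happy function $H$. Let $n$ be a positive integer satisfying bound (B): (B1) $4\left(1+3\mu+\sqrt{2}\,\sigma\, b^{5n/8}\right)\le b^{n-1}$, (B2) $\sqrt{3\mu b}\,\sigma\le b^{3n/8}$, (B3) $4\mu\left(3\mu+1+b^{3n/4}+2\sigma\mu^{-1/2}b^{5n/8}\right)\le b^{n-1}$. Let $\lambda=b^{n/8}$, let $a\in[b^{n-1},b^n]$, and define $f(x)=1+\frac34\mu x+\lambda\sigma\sqrt{\frac34 x}$ for $x\ge0$. Then there exists an integer $n_2$ such that - $\frac{b^{n-1}}{\mu}\le n_2\le\frac{4}{3\mu}b^n$, - $4\mid n_2$, - $0\le a-f(n_2)\le 3\mu+1$.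
   Context: A generalized $b$-happy function: fix an integer $b>1$ and non-negative integers $h(0),\dots,h(b-1)$ with $h(0)=0$, $h(1)=1$; for $n=\sum_{i=0}^k a_ib^i$ in base $b$, $H(n)=\sum_{i=0}^k h(a_i)$. Its digit mean is $\mu=\frac1b\sum_{j=0}^{b-1}h(j)$ and its digit variance is $\sigma^2=\frac1b\sum_{j=0}^{b-1}(h(j)-\mu)^2$, with $\sigma\ge0$. *)

theory Defs
  imports Complex_Main
begin

text \<open>A generalized b-happy function is determined by the digit values h(0..b-1),
  non-negative integers with h(0)=0 and h(1)=1.\<close>

definition happy_digits :: "nat \<Rightarrow> (nat \<Rightarrow> nat) \<Rightarrow> bool" where
  "happy_digits b h \<longleftrightarrow> b > 1 \<and> h 0 = 0 \<and> h 1 = 1"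

fun happy_H :: "nat \<Rightarrow> (nat \<Rightarrow> nat) \<Rightarrow> nat \<Rightarrow> nat" where
  "happy_H b h n = (if n = 0 \<or> b \<le> 1 then 0 else h (n mod b) + happy_H b h (n div b))"

definition digit_mean :: "nat \<Rightarrow> (nat \<Rightarrow> nat) \<Rightarrow> real" where
  "digit_mean b h = (1 / real b) * (\<Sum>j<b. real (h j))"

definition digit_variance :: "nat \<Rightarrow> (nat \<Rightarrow> nat) \<Rightarrow> real" where
  "digit_variance b h = (1 / real b) * (\<Sum>j<b. (real (h j) - digit_mean b h)\<^sup>2)"

definition digit_sd :: "nat \<Rightarrow> (nat \<Rightarrow> nat) \<Rightarrow> real" where
  "digit_sd b h = sqrt (digit_variance b h)"

end

theory Submission imports Defs begin
lemma step_aux: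
  fixes x c :: real assumes x: "x > 0" and c: "c \<ge> 0" and h: "3 * c^2 \<le> x"
  shows "c * (sqrt (3/4*(x+4)) - sqrt (3/4*x)) \<le> 1"
proof -
  define s where "s = sqrt (3/4*x)"
  define t where "t = sqrt (3/4*(x+4))"
  have s0: "s > 0" using x by (simp add: s_def)
  have t0: "t \<ge> 0" using x by (simp add: t_def)
  have ts: "t^2 = s^2 + 3" using x unfolding s_def t_def by (simp add: algebra_simps)
  have "(t - s) * (t + s) = 3" using ts by (simp add: algebra_simps power2_eq_square)
  hence ts3: "t - s = 3 / (t + s)" using s0 t0 by (simp add: eq_divide_eq)
  have "3 * c \<le> t + s"
  proof -
    have e: "(2*s)^2 = 3*x" using x unfolding s_def power_mult_distrib by simp
    have "(3*c)^2 = 9 * c^2" by (simp add: power_mult_distrib)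
    hence "(3*c)^2 \<le> (2*s)^2" using h e by linarith
    hence "3*c \<le> 2*s" by (rule power2_le_imp_le) (use s0 in auto)
    moreover have "s \<le> t" unfolding s_def t_def by (simp add: real_sqrt_le_iff)
    ultimately show ?thesis by linarith
  qed
  hence "c * 3 / (t + s) \<le> 1" using s0 t0 by (simp add: divide_le_eq)
  thus ?thesis using ts3 unfolding s_def t_def by simp
qed

lemma qpow: "(0::real) < B \<Longrightarrow> (B powr (real n / 8)) ^ k = B powr (real k * real n / 8)"
  by (simp add: powr_realpow[symmetric] powr_powr mult.commute)

lemma mean_pos: assumes "happy_digits b h" shows "digit_mean b h * real b \<ge> 1"
proof -
  have b: "b > 1" "h 1 = 1" using assms by (auto simp: happy_digits_def)
  have "real (h 1) \<le> (\<Sum>j<b. real (h j))"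
    by (rule member_le_sum) (use b in auto)
  thus ?thesis using b by (simp add: digit_mean_def)
qed

theorem lemma6p2:
  fixes b n :: nat and h :: "nat \<Rightarrow> nat" and a :: real
  assumes hb: "happy_digits b h"
    and hn: "n > 0"
    and B1: "4 * (1 + 3 * digit_mean b h + sqrt 2 * digit_sd b h * real b powr (5 * real n / 8))
              \<le> real b ^ (n - 1)"
    and B2: "sqrt (3 * digit_mean b h * real b) * digit_sd b h \<le> real b powr (3 * real n / 8)"
    and B3: "4 * digit_mean b h * (3 * digit_mean b h + 1 + real b powr (3 * real n / 4)
              + 2 * digit_sd b h * digit_mean b h powr (-1/2) * real b powr (5 * real n / 8))
              \<le> real b ^ (n - 1)"
    and ha: "real b ^ (n - 1) \<le> a" "a \<le> real b ^ n"
  shows "let \<mu> = digit_mean b h; \<sigma> = digit_sd b h; lam = real b powr (real n / 8);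
             f = (\<lambda>x::real. 1 + 3/4 * \<mu> * x + lam * \<sigma> * sqrt (3/4 * x))
         in \<exists>n2::int. real b ^ (n - 1) / \<mu> \<le> real_of_int n2
                    \<and> real_of_int n2 \<le> 4 / (3 * \<mu>) * real b ^ n
                    \<and> 4 dvd n2
                    \<and> 0 \<le> a - f (real_of_int n2) \<and> a - f (real_of_int n2) \<le> 3 * \<mu> + 1"
proof -
  define \<mu> where "\<mu> = digit_mean b h"
  define \<sigma> where "\<sigma> = digit_sd b h"
  define B where "B = real b"
  define q where "q = B powr (real n / 8)"
  define P where "P = B ^ (n - 1)"
  define f where "f = (\<lambda>x::real. 1 + 3/4 * \<mu> * x + q * \<sigma> * sqrt (3/4 * x))"
  define L where "L = P / \<mu>"
  define U where "U = 4 / (3 * \<mu>) * B ^ n"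
  have Bg: "B > 1" using hb by (simp add: happy_digits_def B_def)
  have muB: "\<mu> * B \<ge> 1" using mean_pos[OF hb] by (simp add: \<mu>_def B_def)
  have mu0: "\<mu> > 0" using muB Bg by (smt (verit) mult_nonpos_nonneg)
  have var0: "0 \<le> digit_variance b h"
    unfolding digit_variance_def by (intro mult_nonneg_nonneg sum_nonneg) auto
  have sig0: "\<sigma> \<ge> 0" unfolding \<sigma>_def digit_sd_def using var0 by simp
  have q0: "q > 0" using Bg by (simp add: q_def)
  have q3: "B powr (3 * real n / 8) = q^3" using qpow[of B n 3] Bg by (simp add: q_def)
  have q5: "B powr (5 * real n / 8) = q^5" using qpow[of B n 5] Bg by (simp add: q_def)
  have q8: "B ^ n = q^8"
  proof -
    have "B ^ n = B powr (real n)" using Bg by (simp add: powr_realpow)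
    thus ?thesis using qpow[of B n 8] Bg by (simp add: q_def)
  qed
  have PB: "P * B = B ^ n" using hn unfolding P_def by (cases n) (auto simp: mult.commute)
  have B1': "4 + 12 * \<mu> + 4 * sqrt 2 * \<sigma> * q^5 \<le> P"
    using B1 q5 by (simp add: \<mu>_def \<sigma>_def B_def P_def algebra_simps)
  have B2a: "sqrt (3 * \<mu> * B) * \<sigma> \<le> q^3" using B2 q3 by (simp add: \<mu>_def \<sigma>_def B_def)
  have B2': "3 * \<mu> * B * \<sigma>^2 \<le> q^6"
  proof -
    have "(sqrt (3 * \<mu> * B) * \<sigma>)^2 \<le> (q^3)^2"
      by (rule power_mono[OF B2a]) (use mu0 Bg sig0 in auto)
    thus ?thesis using mu0 Bg by (simp add: power_mult_distrib power_mult[symmetric])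
  qed
  have key0: "3 * \<mu> * (q^2 * \<sigma>^2) * B \<le> P * B"
  proof -
    have "3 * \<mu> * (q^2 * \<sigma>^2) * B = q^2 * (3 * \<mu> * B * \<sigma>^2)" by (simp add: algebra_simps)
    also have "\<dots> \<le> q^2 * q^6" by (rule mult_left_mono[OF B2']) simp
    also have "\<dots> = P * B" using PB q8 by (simp add: power_add[symmetric])
    finally show ?thesis .
  qed
  hence "3 * \<mu> * (q^2 * \<sigma>^2) \<le> P" using Bg by simp
  hence key: "3 * (q * \<sigma>)^2 \<le> L" using mu0 unfolding L_def by (simp add: field_simps power_mult_distrib)
  have sq2: "sqrt 2 * \<sigma> * q^5 \<ge> 0" using sig0 q0 by simp
  have P4: "P \<ge> 12 * \<mu> + 4" using B1' sq2 by linarith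
  have "P * 1 \<le> P * B" by (rule mult_left_mono) (use Bg P4 mu0 in auto)
  hence BnP: "B ^ n \<ge> P" using PB by simp
  have L0: "L > 0" using P4 mu0 by (simp add: L_def)
  have LBn: "L \<le> B ^ n"
  proof -
    have Ppos: "P > 0" using P4 mu0 by linarith
    have "1 * P \<le> \<mu> * B * P" by (rule mult_right_mono[OF muB]) (use Ppos in simp)
    hence "P \<le> \<mu> * B * P" by simp
    also have "\<dots> = \<mu> * B^n" using PB by (simp add: algebra_simps)
    finally show ?thesis using mu0 by (simp add: L_def divide_le_eq mult.commute)
  qed
  have LU: "L + 4 \<le> U"
  proof -
    have "4 * B^n - 3 * P \<ge> 12 * \<mu>" using BnP P4 by linarith
    hence "3 * \<mu> * (L + 4) \<le> 4 * B ^ n" using mu0 by (simp add: L_def algebra_simps)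
    thus ?thesis using mu0 by (simp add: U_def field_simps)
  qed
  have fmono: "f x \<le> f y" if "x \<le> y" for x y
    unfolding f_def using that mu0 q0 sig0
    by (intro add_mono mult_left_mono) (auto intro: mult_nonneg_nonneg)
  have fstep: "f (x + 4) - f x \<le> 3 * \<mu> + 1" if "L \<le> x" for x
  proof -
    have "q * \<sigma> * (sqrt (3/4*(x+4)) - sqrt (3/4*x)) \<le> 1"
      by (rule step_aux) (use that L0 key q0 sig0 in auto)
    hence "q * \<sigma> * sqrt (3/4*(x+4)) \<le> 1 + q * \<sigma> * sqrt (3/4*x)" by (simp add: algebra_simps)
    moreover have "3/4 * \<mu> * (x + 4) = 3/4 * \<mu> * x + 3 * \<mu>" by (simp add: algebra_simps)
    ultimately show ?thesis unfolding f_def by linarith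
  qed
  define k0 where "k0 = ceiling (L / 4)"
  have k0a: "L \<le> 4 * real_of_int k0" unfolding k0_def by linarith
  have k0b: "4 * real_of_int k0 < L + 4" unfolding k0_def by linarith
  have fL4: "f (L + 4) \<le> a"
  proof -
    have "3/4 * (L + 4) = 3/4 * L + 3" by simp
    hence "3/4 * (L + 4) \<le> 2 * B^n" using LBn BnP P4 mu0 by linarith
    hence "sqrt (3/4 * (L+4)) \<le> sqrt (2 * q^8)" using q8 by simp
    also have "\<dots> = sqrt 2 * q^4"
    proof -
      have "q^8 = (q^4)^2" by (simp add: power_mult[symmetric])
      hence "sqrt (q^8) = q^4" by (intro real_sqrt_unique) (use q0 in auto)
      thus ?thesis by (simp add: real_sqrt_mult)
    qed
    finally have "q * \<sigma> * sqrt (3/4 * (L+4)) \<le> q * \<sigma> * (sqrt 2 * q^4)"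
      by (rule mult_left_mono) (use q0 sig0 in simp)
    moreover have "q * \<sigma> * (sqrt 2 * q^4) = sqrt 2 * \<sigma> * q^5" by (simp add: algebra_simps power_Suc[symmetric] del: power_Suc)
    ultimately have s: "q * \<sigma> * sqrt (3/4 * (L+4)) \<le> sqrt 2 * \<sigma> * q^5" by simp
    have "3/4 * \<mu> * (L + 4) = 3/4 * P + 3 * \<mu>" using mu0 by (simp add: L_def algebra_simps)
    hence "f (L+4) = 1 + 3/4 * P + 3 * \<mu> + q * \<sigma> * sqrt (3/4 * (L+4))" by (simp add: f_def)
    also have "\<dots> \<le> P" using s B1' by linarith
    finally show ?thesis using ha by (simp add: P_def B_def)
  qed
  define S where "S = {k::int. L \<le> 4 * real_of_int k \<and> 4 * real_of_int k \<le> U \<and> f (4 * real_of_int k) \<le> a}"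
  have k0S: "k0 \<in> S" unfolding S_def using k0a k0b LU fmono[of "4 * real_of_int k0" "L+4"] fL4 by auto
  have finS: "finite S"
  proof (rule finite_subset)
    show "S \<subseteq> {k0 .. floor (U / 4)}"
    proof
      fix k assume "k \<in> S"
      hence "L \<le> 4 * real_of_int k" "4 * real_of_int k \<le> U" by (auto simp: S_def)
      thus "k \<in> {k0 .. floor (U / 4)}" unfolding k0_def by (auto simp: ceiling_le_iff le_floor_iff)
    qed
  qed simp
  define k where "k = Max S"
  have kS: "k \<in> S" unfolding k_def using finS k0S by (intro Max_in) auto
  have kmax: "\<And>j. j \<in> S \<Longrightarrow> j \<le> k" unfolding k_def using finS by simp
  have k1: "L \<le> 4 * real_of_int k" "4 * real_of_int k \<le> U" "f (4 * real_of_int k) \<le> a"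
    using kS by (auto simp: S_def)
  have up: "a - f (4 * real_of_int k) \<le> 3 * \<mu> + 1"
  proof (cases "4 * real_of_int (k + 1) \<le> U")
    case True
    have "k + 1 \<notin> S" using kmax by fastforce
    hence "f (4 * real_of_int k + 4) > a" using True k1 by (auto simp: S_def algebra_simps)
    thus ?thesis using fstep[OF k1(1)] by linarith
  next
    case False
    have "3/4 * \<mu> * (U - 4) = B ^ n - 3 * \<mu>" using mu0 by (simp add: U_def field_simps)
    moreover have "3/4 * \<mu> * (U - 4) \<le> 3/4 * \<mu> * (4 * real_of_int k)"
      using False mu0 by (intro mult_left_mono) auto
    moreover have "q * \<sigma> * sqrt (3/4 * (4 * real_of_int k)) \<ge> 0"
      using q0 sig0 k1 L0 by simp
    ultimately have "f (4 * real_of_int k) \<ge> 1 + B^n - 3 * \<mu>" unfolding f_def by linarith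
    thus ?thesis using ha by (simp add: B_def)
  qed
  show ?thesis
    unfolding Let_def
    apply (rule exI[of _ "4 * k"])
    using k1 up unfolding \<mu>_def[symmetric] \<sigma>_def[symmetric] q_def B_def P_def L_def U_def f_def
    by auto
qed
end
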